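(* There exists a hereditary subshift $X\subseteq\{0,1\}^{\mathbb{N}}$ whose factor complexity is sublinear (the number of words of length $n$ in its language is $\mathcal{O}(n)$) and which has infinite coding dimension.
   Context: Subshift: closed shift-invariant subset of $\{0,1\}^{\mathbb{N}}$. $X$ is hereditary if whenever $\mathbf{y}\in X$ and $\mathbf{x}\le\mathbf{y}$ coordinatewise (with $0<1$), then $\mathbf{x}\in X$. Infinite coding dimension means there is no $d\in\mathbb{N}$ with $\sum_i x_i\le d$ for all $\mathbf{x}\in X$. *)

theory Defs
  imports "HOL-Analysis.Analysis"
begin

text \<open>Points of {0,1}^N are modelled as nat => bool (False = 0, True = 1);
  the coordinatewise order is the pointwise order on functions (False < True).\<close>

definition shift :: "(nat \<Rightarrow> bool) \<Rightarrow> (nat \<Rightarrow> bool)" where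
  "shift x = (\<lambda>n. x (Suc n))"

definition cantor_top :: "(nat \<Rightarrow> bool) topology" where
  "cantor_top = product_topology (\<lambda>_. discrete_topology UNIV) UNIV"

definition subshift :: "(nat \<Rightarrow> bool) set \<Rightarrow> bool" where
  "subshift X \<longleftrightarrow> closedin cantor_top X \<and> shift ` X \<subseteq> X"

definition hereditary :: "(nat \<Rightarrow> bool) set \<Rightarrow> bool" where
  "hereditary X \<longleftrightarrow> (\<forall>y\<in>X. \<forall>x. x \<le> y \<longrightarrow> x \<in> X)"

definition lang :: "(nat \<Rightarrow> bool) set \<Rightarrow> nat \<Rightarrow> bool list set" where
  "lang X n = {map (\<lambda>i. x (k + i)) [0..<n] | x k. x \<in> X}"

definition complexity :: "(nat \<Rightarrow> bool) set \<Rightarrow> nat \<Rightarrow> nat" where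
  "complexity X n = card (lang X n)"

definition infinite_coding_dimension :: "(nat \<Rightarrow> bool) set \<Rightarrow> bool" where
  "infinite_coding_dimension X \<longleftrightarrow>
     \<not> (\<exists>d::nat. \<forall>x\<in>X. finite {i. x i} \<and> card {i. x i} \<le> d)"

end

theory Submission
  imports Defs
begin

lemma top_UNIV: "topspace cantor_top = UNIV"
  by (simp add: cantor_top_def topspace_product_topology PiE_UNIV_domain)
lemma open_coord: "openin cantor_top {y. y j = b}"
proof -
  have "openin cantor_top {y \<in> topspace cantor_top. (\<lambda>y. y j) y \<in> {b}}"
    unfolding cantor_top_def
    by (rule openin_continuous_map_preimage[OF continuous_map_product_projection]) auto
  thus ?thesis by (simp add: top_UNIV)
qed
lemma open_cyl: "finite F \<Longrightarrow> openin cantor_top {y. \<forall>i\<in>F. y i = x i}"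
proof (induction F rule: finite_induct)
  case empty then show ?case using openin_topspace[of cantor_top] by (simp add: top_UNIV)
next
  case (insert j F)
  have "{y. \<forall>i\<in>insert j F. y i = x i} = {y. y j = x j} \<inter> {y. \<forall>i\<in>F. y i = x i}" by auto
  then show ?case using openin_Int[OF open_coord insert.IH] by simp
qed
lemma closed_crit:
  assumes "\<And>x. x \<notin> X \<Longrightarrow> \<exists>F. finite F \<and> (\<forall>y. (\<forall>i\<in>F. y i = x i) \<longrightarrow> y \<notin> X)"
  shows "closedin cantor_top X"
  unfolding closedin_def top_UNIV
proof
  show "openin cantor_top (UNIV - X)"
  proof (subst openin_subopen, intro ballI)
    fix x assume "x \<in> UNIV - X"
    then have "x \<notin> X" by simp
    from assms[OF this] obtain F where F: "finite F" "\<forall>y. (\<forall>i\<in>F. y i = x i) \<longrightarrow> y \<notin> X" by (elim exE conjE)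
    show "\<exists>T. openin cantor_top T \<and> x \<in> T \<and> T \<subseteq> UNIV - X"
    proof (intro exI conjI)
      show "openin cantor_top {y. \<forall>i\<in>F. y i = x i}" using open_cyl F(1) by blast
      show "x \<in> {y. \<forall>i\<in>F. y i = x i}" by simp
      show "{y. \<forall>i\<in>F. y i = x i} \<subseteq> UNIV - X" using F(2) by auto
    qed
  qed
qed simp


fun a :: "nat \<Rightarrow> nat" where
  "a 0 = 1" | "a (Suc k) = 2^(k+3) * a k"

definition gap :: "nat \<Rightarrow> nat" where "gap k = a (Suc k) - a k"

lemma a_pos: "1 \<le> a k" by (induction k) auto
lemma a_Suc2: "2 * a k \<le> a (Suc k)"
proof -
  have "(2::nat) \<le> 2^(k+3)" using power_increasing[of 1 "k+3" "2::nat"] by simp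
  then have "2 * a k \<le> 2^(k+3) * a k" by (rule mult_le_mono1)
  then show ?thesis by simp
qed
declare a.simps(2)[simp del]
lemma a_smono: "strict_mono a"
proof (rule strict_monoI_Suc)
  fix n show "a n < a (Suc n)" using a_Suc2[of n] a_pos[of n] by linarith
qed
lemma a_ge: "k \<le> a k"
proof (induction k)
  case (Suc k) then show ?case using a_Suc2[of k] a_pos[of k] by linarith
qed simp
lemma a_double: "p < q \<Longrightarrow> 2 * a p \<le> a q"
  using a_Suc2[of p] strict_mono_less_eq[OF a_smono, of "Suc p" q] by simp
lemma gap_ge: "a k \<le> gap k" using a_Suc2[of k] unfolding gap_def by simp
lemma gap_mono: "k \<le> m \<Longrightarrow> gap k \<le> gap m"
proof (rule lift_Suc_mono_le[of gap])
  fix n show "gap n \<le> gap (Suc n)"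
    using a_Suc2[of "Suc n"] unfolding gap_def by simp
qed

definition K :: "nat \<Rightarrow> nat" where "K n = (LEAST k. n \<le> gap k)"

lemma K1: "n \<le> gap (K n)"
  unfolding K_def by (rule LeastI[of _ n]) (use gap_ge a_ge le_trans in blast)
lemma K2: "m < K n \<Longrightarrow> gap m < n"
  unfolding K_def using not_less_Least by (metis not_le)

definition XX :: "(nat \<Rightarrow> bool) set" where
  "XX = {x. \<exists>s. \<forall>i. x i \<longrightarrow> i + s \<in> range a}"

definition W1 :: "nat \<Rightarrow> bool list set" where
  "W1 n = (\<lambda>j. map (\<lambda>i. i = j) [0..<n]) ` {..n}"
definition W2 :: "nat \<Rightarrow> bool list set" where
  "W2 n = (\<lambda>(t,S). map (\<lambda>i. i + t \<in> a ` S) [0..<n]) ` ({..a (K n - 1)} \<times> Pow {..K n})"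

lemma lang_sub: "lang XX n \<subseteq> W1 n \<union> W2 n"
proof
  fix w assume "w \<in> lang XX n"
  then obtain x k s where w: "w = map (\<lambda>i. x (k+i)) [0..<n]" and s: "\<forall>i. x i \<longrightarrow> i + s \<in> range a"
    unfolding lang_def XX_def by auto
  define t where "t = k + s"
  have H: "x (k+i) \<Longrightarrow> i + t \<in> range a" for i using s[rule_format, of "k+i"] unfolding t_def
    by (simp add: ac_simps)
  show "w \<in> W1 n \<union> W2 n"
  proof (cases "\<exists>i j. i < j \<and> j < n \<and> x (k+i) \<and> x (k+j)")
    case True
    then obtain i j where ij: "i < j" "j < n" "x (k+i)" "x (k+j)" by blast
    obtain p where p: "a p = i + t" using H[OF ij(3)] by auto
    obtain q where q: "a q = j + t" using H[OF ij(4)] by auto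
    have "p < q" using p q ij(1) strict_mono_less[OF a_smono] by (metis add_less_mono1)
    then have "a (Suc p) \<le> a q" using strict_mono_less_eq[OF a_smono] by simp
    then have "gap p < n" using p q ij unfolding gap_def by linarith
    have pK: "p < K n"
    proof (rule ccontr)
      assume "\<not> p < K n"
      then have "gap (K n) \<le> gap p" using gap_mono by simp
      then show False using K1[of n] \<open>gap p < n\<close> by simp
    qed
    then have "a p \<le> a (K n - 1)" using strict_mono_less_eq[OF a_smono] by simp
    then have tK: "t \<le> a (K n - 1)" using p by simp
    have aK: "a (K n - 1) \<le> a (K n)" using strict_mono_less_eq[OF a_smono] by simp
    have aSK: "a (Suc (K n)) = a (K n) + gap (K n)" using a_Suc2[of "K n"] unfolding gap_def by simp
    define S where "S = {r. r \<le> K n \<and> (\<exists>i<n. x (k+i) \<and> a r = i + t)}"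
    have "w = map (\<lambda>i. i + t \<in> a ` S) [0..<n]"
      unfolding w map_eq_conv
    proof
      fix i assume "i \<in> set [0..<n]"
      then have i: "i < n" by simp
      show "x (k+i) = (i + t \<in> a ` S)"
      proof
        assume xi: "x (k+i)"
        then obtain r where r: "a r = i + t" using H by force
        have "a r < a (Suc (K n))" using r i tK aK aSK K1[of n] by linarith
        then have "r \<le> K n" using strict_mono_less[OF a_smono] by (metis less_Suc_eq_le)
        then show "i + t \<in> a ` S" using r i xi unfolding S_def by force
      next
        assume "i + t \<in> a ` S"
        then obtain r i' where "a r = i + t" "i' < n" "x (k+i')" "a r = i' + t" unfolding S_def by auto
        then show "x (k+i)" by simp
      qed
    qed
    moreover have "(t, S) \<in> {..a (K n - 1)} \<times> Pow {..K n}" using tK unfolding S_def by auto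
    ultimately show ?thesis unfolding W2_def by force
  next
    case False
    show ?thesis
    proof (cases "\<exists>i<n. x (k+i)")
      case True
      then obtain i where i: "i < n" "x (k+i)" by blast
      have "w = map (\<lambda>l. l = i) [0..<n]"
        unfolding w map_eq_conv using False i by (metis atLeastLessThan_iff linorder_neqE_nat set_upt)
      then show ?thesis unfolding W1_def using i by auto
    next
      case F2: False
      have "w = map (\<lambda>l. l = n) [0..<n]" unfolding w map_eq_conv using F2 by auto
      then show ?thesis unfolding W1_def by auto
    qed
  qed
qed

lemma complexity_bound: "1 \<le> n \<Longrightarrow> complexity XX n \<le> 6 * n"
proof -
  assume n: "1 \<le> n"
  have f1: "finite (W1 n)" "finite (W2 n)" unfolding W1_def W2_def by auto
  have c1: "card (W1 n) \<le> n + 1" unfolding W1_def using card_image_le[of "{..n}"] by fastforce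
  have c2: "card (W2 n) \<le> (a (K n - 1) + 1) * 2^(K n + 1)"
    unfolding W2_def using card_image_le[of "{..a (K n - 1)} \<times> Pow {..K n}"]
    by (simp add: card_cartesian_product card_Pow)
  have c3: "(a (K n - 1) + 1) * 2^(K n + 1) \<le> 4 * n"
  proof (cases "K n")
    case 0 then show ?thesis using n by simp
  next
    case (Suc m)
    have g: "gap m < n" using K2[of m n] Suc by simp
    have "(a m + 1) * 2^(m+2) \<le> (2 * a m) * 2^(m+2)" using a_pos[of m] by simp
    also have "\<dots> = a (Suc m)" by (simp add: a.simps power_add)
    also have "\<dots> \<le> 2 * gap m" using a_Suc2[of m] unfolding gap_def by simp
    finally show ?thesis using Suc g by simp
  qed
  have "complexity XX n \<le> card (W1 n \<union> W2 n)"
    unfolding complexity_def using lang_sub f1 by (simp add: card_mono)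
  also have "\<dots> \<le> card (W1 n) + card (W2 n)" by (rule card_Un_le)
  finally show ?thesis using c1 c2 c3 n by linarith
qed


lemma XX_le1: assumes "\<not> (\<exists>i j. i < j \<and> x i \<and> x j)" shows "x \<in> XX"
proof (cases "\<exists>i. x i")
  case True
  then obtain i where i: "x i" by blast
  have u: "x l \<Longrightarrow> l = i" for l using assms i by (metis linorder_neqE_nat)
  have "\<forall>l. x l \<longrightarrow> l + (a i - i) \<in> range a"
    using u a_ge[of i] by auto
  then show ?thesis unfolding XX_def by blast
next
  case False then show ?thesis unfolding XX_def by auto
qed

lemma XX_closed: "closedin cantor_top XX"
proof (rule closed_crit)
  fix x assume nx: "x \<notin> XX"
  then obtain i j where ij: "i < j" "x i" "x j" using XX_le1 by blast
  define D where "D = {s. i + s \<in> range a \<and> j + s \<in> range a}"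
  have "D \<subseteq> {..2*j}"
  proof
    fix s assume "s \<in> D"
    then have "i + s \<in> range a" "j + s \<in> range a" unfolding D_def by simp_all
    then obtain p q where p: "i + s = a p" and q: "j + s = a q" by blast
    have "a p < a q" using p q ij(1) by linarith
    then have "p < q" using strict_mono_less[OF a_smono] by blast
    then have "2 * a p \<le> a q" by (rule a_double)
    then show "s \<in> {..2*j}" using p q by simp
  qed
  then have fD: "finite D" by (rule finite_subset) simp
  have "\<exists>l. x l \<and> l + s \<notin> range a" for s using nx unfolding XX_def by blast
  then obtain l where l: "\<And>s. x (l s) \<and> l s + s \<notin> range a" by metis
  show "\<exists>F. finite F \<and> (\<forall>y. (\<forall>i\<in>F. y i = x i) \<longrightarrow> y \<notin> XX)"
  proof (intro exI conjI allI impI)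
    show "finite ({i, j} \<union> l ` D)" using fD by simp
    fix y assume ag: "\<forall>k\<in>{i, j} \<union> l ` D. y k = x k"
    show "y \<notin> XX"
    proof
      assume "y \<in> XX"
      then obtain s where s: "\<And>k. y k \<Longrightarrow> k + s \<in> range a" unfolding XX_def by blast
      have "y i" "y j" using ag ij by simp_all
      then have "s \<in> D" using s unfolding D_def by simp
      then have "y (l s) = x (l s)" using ag by simp
      then have "y (l s)" using l by simp
      then show False using s l by blast
    qed
  qed
qed

theorem mainTheorem6:
  shows "\<exists>X. subshift X \<and> hereditary X \<and>
           (\<exists>C::real. \<forall>n\<ge>1. real (complexity X n) \<le> C * real n) \<and>
           infinite_coding_dimension X"
proof (intro exI conjI)
  show "subshift XX" unfolding subshift_def
  proof
    show "closedin cantor_top XX" by (rule XX_closed)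
    show "shift ` XX \<subseteq> XX"
    proof
      fix z assume "z \<in> shift ` XX"
      then obtain x s where z: "z = shift x" and s: "\<forall>i. x i \<longrightarrow> i + s \<in> range a"
        unfolding XX_def by auto
      have "\<forall>i. z i \<longrightarrow> i + Suc s \<in> range a"
      proof (intro allI impI)
        fix i assume "z i"
        then have "x (Suc i)" by (simp add: z shift_def)
        then have "Suc i + s \<in> range a" using s by blast
        then show "i + Suc s \<in> range a" by simp
      qed
      then show "z \<in> XX" unfolding XX_def by blast
    qed
  qed
  show "hereditary XX" unfolding hereditary_def XX_def by (auto simp: le_fun_def)
  show "\<forall>n\<ge>1. real (complexity XX n) \<le> 6 * real n"
  proof (intro allI impI)
    fix n :: nat assume "1 \<le> n"
    then have "complexity XX n \<le> 6 * n" by (rule complexity_bound)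
    then show "real (complexity XX n) \<le> 6 * real n" by (metis of_nat_le_iff of_nat_mult of_nat_numeral)
  qed
  show "infinite_coding_dimension XX" unfolding infinite_coding_dimension_def
  proof
    assume "\<exists>d::nat. \<forall>x\<in>XX. finite {i. x i} \<and> card {i. x i} \<le> d"
    then obtain d where d: "\<forall>x\<in>XX. finite {i. x i}" by blast
    have "(\<lambda>i. i \<in> range a) \<in> XX" unfolding XX_def by (intro CollectI exI[of _ 0]) simp
    then have "finite {i. (\<lambda>i. i \<in> range a) i}" using d by blast
    then have "finite (range a)" by simp
    moreover have "infinite (range a)" using strict_mono_imp_inj_on[OF a_smono] range_inj_infinite by blast
    ultimately show False by simp
  qed
qed

end
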